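(* Let $\mathbf{X}$ be a real random variable with finite support $\{v_1,\dots,v_\ell\}$, taking value $v_i$ with probability $\alpha_i>0$, and let $\alpha=\min_i\alpha_i$. Let $p,q:\mathbb{R}^k\to\mathbb{R}$ be two functions such that the distributions of $p(\mathbf{X}^{\otimes k})$ and $q(\mathbf{X}^{\otimes k})$ are identical. Then any algorithm which, given access to independent noiseless labeled examples $(\mathbf{x},r(\mathbf{x}))$ with $\mathbf{x}\sim\mathbf{X}^{\otimes n}$, correctly (with high confidence) distinguishes between the two possibilities that $r(x)=p(x_{i_1},\dots,x_{i_k})$ for some $i_1,\dots,i_k\in[n]$, versus $r(x)=q(x_{i_1},\dots,x_{i_k})$ for some $i_1,\dots,i_k\in[n]$, must use $m=\Omega_{k,\ell,\alpha}(\log n)$ samples.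
   Context: $\mathbf{X}^{\otimes n}$ denotes a vector of $n$ i.i.d. copies of $\mathbf{X}$. The quantities $k,\ell,\alpha$ do not depend on $n$. *)

theory Defs
  imports "HOL-Probability.Probability"
begin

definition labeled_examples ::
  "nat \<Rightarrow> nat \<Rightarrow> real pmf \<Rightarrow> (real list \<Rightarrow> real) \<Rightarrow> (real list \<times> real) list pmf" where
  "labeled_examples m n X r = replicate_pmf m (map_pmf (\<lambda>x. (x, r x)) (replicate_pmf n X))"

text \<open>Labeling functions of the form x \<mapsto> f(x_{i_1},...,x_{i_k}) with i_1,...,i_k in [n]
  (indices are 0-based here: i_j < n).\<close>
definition junta_class :: "nat \<Rightarrow> nat \<Rightarrow> (real list \<Rightarrow> real) \<Rightarrow> (real list \<Rightarrow> real) set" where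
  "junta_class n k f = {r. \<exists>is. length is = k \<and> set is \<subseteq> {..<n} \<and> r = (\<lambda>x. f (map (\<lambda>i. x ! i) is))}"

text \<open>A randomized algorithm A, fed m labeled examples, outputs True ("p") or False ("q").\<close>
definition distinguishes ::
  "nat \<Rightarrow> nat \<Rightarrow> nat \<Rightarrow> real pmf \<Rightarrow> (real list \<Rightarrow> real) \<Rightarrow> (real list \<Rightarrow> real)
     \<Rightarrow> ((real list \<times> real) list \<Rightarrow> bool pmf) \<Rightarrow> bool" where
  "distinguishes m n k X p q A \<longleftrightarrow>
     (\<forall>r \<in> junta_class n k p. pmf (bind_pmf (labeled_examples m n X r) A) True \<ge> 2/3) \<and>
     (\<forall>r \<in> junta_class n k q. pmf (bind_pmf (labeled_examples m n X r) A) False \<ge> 2/3)"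

end

theory Submission
  imports Defs
begin

lemma rep_map: "replicate_pmf m (map_pmf f D) = map_pmf (map f) (replicate_pmf m D)"
  by (induction m) (simp_all add: map_pmf_def bind_assoc_pmf bind_return_pmf)

lemma rep_Suc_pair: "replicate_pmf (Suc m) E = map_pmf (\<lambda>(x,xs). x # xs) (pair_pmf E (replicate_pmf m E))"
  by (simp add: pair_pmf_def map_pmf_def bind_assoc_pmf bind_return_pmf)

lemma pmf_rep: "pmf (replicate_pmf m E) z = (if length z = m then prod_list (map (pmf E) z) else 0)"
proof (induction m arbitrary: z)
  case 0
  then show ?case by (cases z) auto
next
  case (Suc m)
  show ?case
  proof (cases z)
    case Nil
    then show ?thesis by (simp add: pmf_eq_0_set_pmf set_replicate_pmf del: replicate_pmf.simps)
  next
    case (Cons a z')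
    have inj: "inj (\<lambda>(x::'a, xs). x # xs)" by (auto simp: inj_def)
    have "pmf (replicate_pmf (Suc m) E) z = pmf (pair_pmf E (replicate_pmf m E)) (a, z')"
      unfolding rep_Suc_pair Cons using pmf_map_inj'[OF inj, of _ "(a,z')"] by simp
    then show ?thesis using Suc Cons by (simp add: pmf_pair)
  qed
qed

lemma pmf_True_False: "pmf M True + pmf M False = 1"
proof -
  have "(\<Sum>x\<in>{True,False}. pmf M x) = 1" by (rule sum_pmf_eq_1) auto
  then show ?thesis by simp
qed

definition sel :: "nat \<Rightarrow> nat \<Rightarrow> real list \<Rightarrow> real list" where
  "sel k i x = map ((!) x) [i..<i+k]"

lemma sel_app: "length u = i \<Longrightarrow> length v = k \<Longrightarrow> sel k i (u @ v @ w) = v"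
  unfolding sel_def by (rule nth_equalityI) (auto simp: nth_append)

lemma rep_add: "replicate_pmf (a + b) X = map_pmf (\<lambda>(u,v). u @ v) (pair_pmf (replicate_pmf a X) (replicate_pmf b X))"
  by (simp add: replicate_pmf_distrib pair_pmf_def map_pmf_def bind_assoc_pmf bind_return_pmf)

lemma block_indep:
  assumes "i + k \<le> j" "j + k \<le> n"
  shows "map_pmf (\<lambda>x. (sel k i x, sel k j x)) (replicate_pmf n X) = pair_pmf (replicate_pmf k X) (replicate_pmf k X)"
proof -
  define d where "d = j - i - k"
  define e where "e = n - j - k"
  have n: "n = i + (k + (d + (k + e)))" and j: "j = i + k + d" using assms by (auto simp: d_def e_def)
  have "map_pmf (\<lambda>x. (sel k i x, sel k j x)) (replicate_pmf n X) =
    do {u \<leftarrow> replicate_pmf i X; v \<leftarrow> replicate_pmf k X; w \<leftarrow> replicate_pmf d X; z \<leftarrow> replicate_pmf k X; s \<leftarrow> replicate_pmf e X;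
        return_pmf (sel k i (u@v@w@z@s), sel k j (u@v@w@z@s))}"
    unfolding n by (simp add: replicate_pmf_distrib bind_assoc_pmf bind_return_pmf map_bind_pmf del: replicate_pmf.simps)
  also have "\<dots> = do {u \<leftarrow> replicate_pmf i X; v \<leftarrow> replicate_pmf k X; w \<leftarrow> replicate_pmf d X; z \<leftarrow> replicate_pmf k X; s \<leftarrow> replicate_pmf e X;
        return_pmf (v, z)}"
  proof (intro bind_pmf_cong refl)
    fix u v w z s
    assume "u \<in> set_pmf (replicate_pmf i X)" "v \<in> set_pmf (replicate_pmf k X)" "w \<in> set_pmf (replicate_pmf d X)"
      "z \<in> set_pmf (replicate_pmf k X)"
    then have l: "length u = i" "length v = k" "length w = d" "length z = k" by (auto simp: set_replicate_pmf)
    have 1: "sel k i (u@v@w@z@s) = v" using sel_app[OF l(1,2)] by simp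
    have "sel k j ((u@v@w)@z@s) = z" using sel_app[of "u@v@w" j z k s] l j by simp
    then show "return_pmf (sel k i (u@v@w@z@s), sel k j (u@v@w@z@s)) = return_pmf (v, z)" using 1 by simp
  qed
  also have "\<dots> = pair_pmf (replicate_pmf k X) (replicate_pmf k X)"
    by (simp add: pair_pmf_def del: replicate_pmf.simps)
  finally show ?thesis .
qed

lemma exp_eq_pmf: "measure_pmf.expectation R (\<lambda>r. if g r = z then 1 else 0 :: real) = pmf (map_pmf g R) z"
proof -
  have "(\<lambda>r. if g r = z then 1 else 0::real) = (\<lambda>r. indicator {z} (g r))" by (auto simp: indicator_def)
  moreover have "measure_pmf.expectation R (\<lambda>r. indicator {z} (g r) :: real) = measure_pmf.expectation (map_pmf g R) (indicator {z})"
    by (rule integral_map_pmf[symmetric])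
  moreover have "measure_pmf.expectation (map_pmf g R) (indicator {z}) = pmf (map_pmf g R) z"
    by (simp add: measure_pmf_single del: integral_map_pmf)
  ultimately show ?thesis by simp
qed

lemma map_pair_eq: "map (\<lambda>x. (f x, g x)) xs = map (\<lambda>a. (a,a)) ys \<longleftrightarrow> map f xs = ys \<and> map g xs = ys"
proof (induction xs arbitrary: ys)
  case Nil
  then show ?case by auto
next
  case (Cons a xs)
  then show ?case by (cases ys) auto
qed

definition ind :: "nat \<Rightarrow> (real list \<Rightarrow> real) \<Rightarrow> nat \<Rightarrow> real list \<Rightarrow> real list list \<Rightarrow> real" where
  "ind k F i y rs = (if map (\<lambda>x. F (sel k i x)) rs = y then 1 else 0)"

lemma prod_ind:
  assumes "i + k \<le> j" "j + k \<le> n" "length y = m"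
  shows "measure_pmf.expectation (replicate_pmf m (replicate_pmf n X)) (\<lambda>rs. ind k F i y rs * ind k G j y rs)
     = prod_list (map (\<lambda>a. pmf (map_pmf F (replicate_pmf k X)) a * pmf (map_pmf G (replicate_pmf k X)) a) y)"
proof -
  define \<theta> where "\<theta> = (\<lambda>x. (F (sel k i x), G (sel k j x)))"
  have "(\<lambda>rs. ind k F i y rs * ind k G j y rs) = (\<lambda>rs. if map \<theta> rs = map (\<lambda>a. (a,a)) y then 1 else 0)"
    unfolding ind_def \<theta>_def map_pair_eq by auto
  then have "measure_pmf.expectation (replicate_pmf m (replicate_pmf n X)) (\<lambda>rs. ind k F i y rs * ind k G j y rs)
     = pmf (map_pmf (map \<theta>) (replicate_pmf m (replicate_pmf n X))) (map (\<lambda>a. (a,a)) y)"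
    by (simp add: exp_eq_pmf)
  also have "\<dots> = pmf (replicate_pmf m (map_pmf \<theta> (replicate_pmf n X))) (map (\<lambda>a. (a,a)) y)"
    by (simp add: rep_map)
  also have "map_pmf \<theta> (replicate_pmf n X) = map_pmf (\<lambda>(u,v). (F u, G v)) (map_pmf (\<lambda>x. (sel k i x, sel k j x)) (replicate_pmf n X))"
    by (simp add: map_pmf_comp \<theta>_def)
  also have "\<dots> = pair_pmf (map_pmf F (replicate_pmf k X)) (map_pmf G (replicate_pmf k X))"
    by (simp add: block_indep[OF assms(1,2)] map_pair)
  finally show ?thesis using assms(3) by (simp add: pmf_rep comp_def pmf_pair del: replicate_pmf.simps)
qed


lemma fin_rep: "finite (set_pmf D) \<Longrightarrow> finite (set_pmf (replicate_pmf m D))"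
proof -
  assume "finite (set_pmf D)"
  then have "finite {xs. set xs \<subseteq> set_pmf D \<and> length xs = m}" by (rule finite_lists_length_eq)
  moreover have "set_pmf (replicate_pmf m D) = {xs. set xs \<subseteq> set_pmf D \<and> length xs = m}"
    by (auto simp: set_replicate_pmf)
  ultimately show ?thesis by simp
qed

definition wb :: "nat \<Rightarrow> (real list \<Rightarrow> real) \<Rightarrow> (real list \<Rightarrow> real) \<Rightarrow> real list \<Rightarrow> nat \<Rightarrow> real list list \<Rightarrow> real" where
  "wb k p q y b rs = ind k p (b*k) y rs - ind k q (b*k) y rs"

lemma cross_lt:
  assumes fin: "finite (set_pmf X)" and mu: "map_pmf p (replicate_pmf k X) = map_pmf q (replicate_pmf k X)"
    and "b < b'" "b' < t" "t * k \<le> n" "length y = m"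
  shows "measure_pmf.expectation (replicate_pmf m (replicate_pmf n X)) (\<lambda>rs. wb k p q y b rs * wb k p q y b' rs) = 0"
proof -
  let ?R = "replicate_pmf m (replicate_pmf n X)"
  have finR: "finite (set_pmf ?R)" using fin by (intro fin_rep) 
  have int: "integrable (measure_pmf ?R) f" for f :: "_ \<Rightarrow> real" using integrable_measure_pmf_finite[OF finR] .
  have l1: "b*k + k \<le> b'*k"
  proof -
    have "(b + 1) * k \<le> b' * k" using assms(3) by (intro mult_right_mono) auto
    then show ?thesis by simp
  qed
  have l2: "b'*k + k \<le> n"
  proof -
    have "(b' + 1) * k \<le> t * k" using assms(4) by (intro mult_right_mono) auto
    then show ?thesis using assms(5) by simp
  qed
  have eq: "(\<lambda>rs. wb k p q y b rs * wb k p q y b' rs) = (\<lambda>rs. ind k p (b*k) y rs * ind k p (b'*k) y rs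
     - ind k p (b*k) y rs * ind k q (b'*k) y rs - ind k q (b*k) y rs * ind k p (b'*k) y rs
     + ind k q (b*k) y rs * ind k q (b'*k) y rs)"
    by (auto simp: wb_def algebra_simps)
  show ?thesis unfolding eq
    by (simp add: int prod_ind[OF l1 l2 assms(6)] mu del: replicate_pmf.simps)
qed

lemma var_bound:
  assumes fin: "finite (set_pmf X)" and mu: "map_pmf p (replicate_pmf k X) = map_pmf q (replicate_pmf k X)"
    and "t * k \<le> n" "length y = m"
  shows "measure_pmf.expectation (replicate_pmf m (replicate_pmf n X)) (\<lambda>rs. (\<Sum>b<t. wb k p q y b rs)^2) \<le> real t"
proof -
  let ?R = "replicate_pmf m (replicate_pmf n X)"
  have finR: "finite (set_pmf ?R)" using fin by (intro fin_rep) 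
  have int: "integrable (measure_pmf ?R) f" for f :: "_ \<Rightarrow> real" using integrable_measure_pmf_finite[OF finR] .
  have cross: "measure_pmf.expectation ?R (\<lambda>rs. wb k p q y b rs * wb k p q y b' rs) = 0"
    if "b \<noteq> b'" "b < t" "b' < t" for b b'
  proof (cases "b < b'")
    case True
    then show ?thesis using cross_lt[OF fin mu True that(3) assms(3,4)] by simp
  next
    case False
    then have "b' < b" using that by simp
    then show ?thesis using cross_lt[OF fin mu _ that(2) assms(3,4)] by (simp add: mult.commute)
  qed
  have diag: "measure_pmf.expectation ?R (\<lambda>rs. wb k p q y b rs * wb k p q y b rs) \<le> 1" for b
  proof -
    have "measure_pmf.expectation ?R (\<lambda>rs. wb k p q y b rs * wb k p q y b rs) \<le> measure_pmf.expectation ?R (\<lambda>rs. 1)"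
      by (intro integral_mono int) (auto simp: wb_def ind_def)
    then show ?thesis by simp
  qed
  have "(\<lambda>rs. (\<Sum>b<t. wb k p q y b rs)^2) = (\<lambda>rs. \<Sum>b<t. \<Sum>b'<t. wb k p q y b rs * wb k p q y b' rs)"
    by (simp add: power2_eq_square sum_product)
  then have "measure_pmf.expectation ?R (\<lambda>rs. (\<Sum>b<t. wb k p q y b rs)^2) =
     (\<Sum>b<t. \<Sum>b'<t. measure_pmf.expectation ?R (\<lambda>rs. wb k p q y b rs * wb k p q y b' rs))"
    by (simp add: int del: replicate_pmf.simps)
  also have "\<dots> = (\<Sum>b<t. measure_pmf.expectation ?R (\<lambda>rs. wb k p q y b rs * wb k p q y b rs))"
  proof (rule sum.cong[OF refl])
    fix b assume b: "b \<in> {..<t}"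
    have "(\<Sum>b'<t. measure_pmf.expectation ?R (\<lambda>rs. wb k p q y b rs * wb k p q y b' rs))
      = (\<Sum>b'<t. if b' = b then measure_pmf.expectation ?R (\<lambda>rs. wb k p q y b rs * wb k p q y b rs) else 0)"
      using b cross by (intro sum.cong) auto
    also have "\<dots> = measure_pmf.expectation ?R (\<lambda>rs. wb k p q y b rs * wb k p q y b rs)"
      using b by simp
    finally show "(\<Sum>b'<t. measure_pmf.expectation ?R (\<lambda>rs. wb k p q y b rs * wb k p q y b' rs))
       = measure_pmf.expectation ?R (\<lambda>rs. wb k p q y b rs * wb k p q y b rs)" .
  qed
  also have "\<dots> \<le> (\<Sum>b<t. 1)" by (intro sum_mono diag)
  finally show ?thesis by simp
qed


lemma abs_Z_bound:
  assumes fin: "finite (set_pmf X)" and mu: "map_pmf p (replicate_pmf k X) = map_pmf q (replicate_pmf k X)"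
    and "t * k \<le> n" "length y = m" "t \<ge> 1"
  shows "measure_pmf.expectation (replicate_pmf m (replicate_pmf n X)) (\<lambda>rs. \<bar>\<Sum>b<t. wb k p q y b rs\<bar>) \<le> sqrt (real t)"
proof -
  let ?R = "replicate_pmf m (replicate_pmf n X)"
  have finR: "finite (set_pmf ?R)" using fin by (intro fin_rep) 
  have int: "integrable (measure_pmf ?R) f" for f :: "_ \<Rightarrow> real" using integrable_measure_pmf_finite[OF finR] .
  define s where "s = sqrt (real t)"
  have s: "s > 0" "s * s = real t" using assms(5) by (auto simp: s_def)
  have pw: "\<bar>z\<bar> \<le> (z^2 + real t) / (2 * s)" for z :: real
  proof -
    have "0 \<le> (\<bar>z\<bar> - s)^2" by simp
    then have "2 * s * \<bar>z\<bar> \<le> z^2 + real t" using s by (simp add: power2_eq_square algebra_simps)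
    then show ?thesis using s by (simp add: field_simps)
  qed
  have "measure_pmf.expectation ?R (\<lambda>rs. \<bar>\<Sum>b<t. wb k p q y b rs\<bar>) \<le>
        measure_pmf.expectation ?R (\<lambda>rs. ((\<Sum>b<t. wb k p q y b rs)^2 + real t) / (2 * s))"
    by (intro integral_mono int pw)
  also have "\<dots> = (measure_pmf.expectation ?R (\<lambda>rs. (\<Sum>b<t. wb k p q y b rs)^2) + real t) / (2 * s)"
    by (simp add: int del: replicate_pmf.simps)
  also have "\<dots> \<le> (real t + real t) / (2 * s)"
    using var_bound[OF fin mu assms(3,4)] s by (intro divide_right_mono) auto
  also have "\<dots> = s" using s by (simp add: field_simps)
  finally show ?thesis by (simp add: s_def)
qed

lemma sel_in: "x \<in> set_pmf (replicate_pmf n X) \<Longrightarrow> i + k \<le> n \<Longrightarrow> sel k i x \<in> set_pmf (replicate_pmf k X)"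
  by (auto simp: set_replicate_pmf sel_def)

lemma zip_map_self: "zip xs (map f xs) = map (\<lambda>x. (x, f x)) xs"
  by (induction xs) auto


lemma main_bound:
  fixes p q :: "real list \<Rightarrow> real" and h :: "(real list \<times> real) list \<Rightarrow> real"
  assumes fin: "finite (set_pmf X)" and mu: "map_pmf p (replicate_pmf k X) = map_pmf q (replicate_pmf k X)"
    and tk: "t * k \<le> n" and t1: "t \<ge> 1" and h01: "\<And>d. 0 \<le> h d \<and> h d \<le> 1"
    and Lab: "Lab = p ` set_pmf (replicate_pmf k X) \<union> q ` set_pmf (replicate_pmf k X)"
    and Y: "Y = {y. set y \<subseteq> Lab \<and> length y = m}"
  shows "(\<Sum>b<t. measure_pmf.expectation (replicate_pmf m (replicate_pmf n X)) (\<lambda>rs. h (map (\<lambda>x. (x, p (sel k (b*k) x))) rs))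
     - measure_pmf.expectation (replicate_pmf m (replicate_pmf n X)) (\<lambda>rs. h (map (\<lambda>x. (x, q (sel k (b*k) x))) rs)))
     \<le> real (card Y) * sqrt (real t)"
proof -
  let ?R = "replicate_pmf m (replicate_pmf n X)"
  have finR: "finite (set_pmf ?R)" using fin by (intro fin_rep) 
  have int: "integrable (measure_pmf ?R) f" for f :: "_ \<Rightarrow> real" using integrable_measure_pmf_finite[OF finR] .
  have finLab: "finite Lab" unfolding Lab using fin_rep[OF fin] by simp
  have finY: "finite Y" unfolding Y using finite_lists_length_eq[OF finLab] by simp
  have bk: "b * k + k \<le> n" if "b < t" for b
  proof -
    have "(b + 1) * k \<le> t * k" using that by (intro mult_right_mono) auto
    then show ?thesis using tk by simp
  qed
  have inY: "map (\<lambda>x. F (sel k (b*k) x)) rs \<in> Y"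
    if "rs \<in> set_pmf ?R" "b < t" "F ` set_pmf (replicate_pmf k X) \<subseteq> Lab" for rs b and F :: "real list \<Rightarrow> real"
  proof -
    have "length rs = m" using that(1) by (simp add: set_replicate_pmf)
    moreover have "F (sel k (b*k) x) \<in> Lab" if "x \<in> set rs" for x
    proof -
      have "x \<in> set_pmf (replicate_pmf n X)" using \<open>rs \<in> set_pmf ?R\<close> that by (auto simp: set_replicate_pmf)
      then have "sel k (b*k) x \<in> set_pmf (replicate_pmf k X)" using sel_in bk[OF \<open>b < t\<close>] by blast
      then show ?thesis using \<open>F ` set_pmf (replicate_pmf k X) \<subseteq> Lab\<close> by blast
    qed
    ultimately show ?thesis unfolding Y by auto
  qed
  have dec: "h (map (\<lambda>x. (x, F (sel k (b*k) x))) rs) = (\<Sum>y\<in>Y. h (zip rs y) * ind k F (b*k) y rs)"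
    if "rs \<in> set_pmf ?R" "b < t" "F ` set_pmf (replicate_pmf k X) \<subseteq> Lab" for rs b and F :: "real list \<Rightarrow> real"
  proof -
    have "(\<Sum>y\<in>Y. h (zip rs y) * ind k F (b*k) y rs) = (\<Sum>y\<in>Y. if map (\<lambda>x. F (sel k (b*k) x)) rs = y then h (zip rs y) else 0)"
      by (intro sum.cong) (auto simp: ind_def)
    also have "\<dots> = h (zip rs (map (\<lambda>x. F (sel k (b*k) x)) rs))"
      using inY[OF that] finY by (simp add: sum.delta)
    finally show ?thesis by (simp add: zip_map_self)
  qed
  have pLab: "p ` set_pmf (replicate_pmf k X) \<subseteq> Lab" and qLab: "q ` set_pmf (replicate_pmf k X) \<subseteq> Lab"
    unfolding Lab by auto
  have pw: "(\<Sum>b<t. h (map (\<lambda>x. (x, p (sel k (b*k) x))) rs) - h (map (\<lambda>x. (x, q (sel k (b*k) x))) rs))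
      \<le> (\<Sum>y\<in>Y. \<bar>\<Sum>b<t. wb k p q y b rs\<bar>)" if rs: "rs \<in> set_pmf ?R" for rs
  proof -
    have "(\<Sum>b<t. h (map (\<lambda>x. (x, p (sel k (b*k) x))) rs) - h (map (\<lambda>x. (x, q (sel k (b*k) x))) rs))
       = (\<Sum>b<t. \<Sum>y\<in>Y. h (zip rs y) * wb k p q y b rs)"
      using dec[OF rs _ pLab] dec[OF rs _ qLab]
      by (intro sum.cong refl) (simp add: wb_def right_diff_distrib sum_subtractf)
    also have "\<dots> = (\<Sum>y\<in>Y. h (zip rs y) * (\<Sum>b<t. wb k p q y b rs))"
      by (subst sum.swap) (simp add: sum_distrib_left)
    also have "\<dots> \<le> (\<Sum>y\<in>Y. \<bar>\<Sum>b<t. wb k p q y b rs\<bar>)"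
    proof (intro sum_mono)
      fix y
      have "h (zip rs y) * (\<Sum>b<t. wb k p q y b rs) \<le> \<bar>h (zip rs y) * (\<Sum>b<t. wb k p q y b rs)\<bar>" by simp
      also have "\<dots> = \<bar>h (zip rs y)\<bar> * \<bar>\<Sum>b<t. wb k p q y b rs\<bar>" by (simp add: abs_mult)
      also have "\<dots> \<le> 1 * \<bar>\<Sum>b<t. wb k p q y b rs\<bar>"
        using h01[of "zip rs y"] by (intro mult_right_mono) auto
      finally show "h (zip rs y) * (\<Sum>b<t. wb k p q y b rs) \<le> \<bar>\<Sum>b<t. wb k p q y b rs\<bar>" by simp
    qed
    finally show ?thesis .
  qed
  have "(\<Sum>b<t. measure_pmf.expectation ?R (\<lambda>rs. h (map (\<lambda>x. (x, p (sel k (b*k) x))) rs))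
     - measure_pmf.expectation ?R (\<lambda>rs. h (map (\<lambda>x. (x, q (sel k (b*k) x))) rs)))
     = measure_pmf.expectation ?R (\<lambda>rs. \<Sum>b<t. h (map (\<lambda>x. (x, p (sel k (b*k) x))) rs) - h (map (\<lambda>x. (x, q (sel k (b*k) x))) rs))"
    by (simp add: int del: replicate_pmf.simps)
  also have "\<dots> \<le> measure_pmf.expectation ?R (\<lambda>rs. \<Sum>y\<in>Y. \<bar>\<Sum>b<t. wb k p q y b rs\<bar>)"
    by (intro integral_mono_AE int) (auto simp: AE_measure_pmf_iff pw simp del: replicate_pmf.simps)
  also have "\<dots> = (\<Sum>y\<in>Y. measure_pmf.expectation ?R (\<lambda>rs. \<bar>\<Sum>b<t. wb k p q y b rs\<bar>))"
    by (simp add: int del: replicate_pmf.simps)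
  also have "\<dots> \<le> (\<Sum>y\<in>Y. sqrt (real t))"
    by (intro sum_mono abs_Z_bound[OF fin mu tk _ t1]) (simp add: Y)
  finally show ?thesis by simp
qed


lemma accept: "pmf (bind_pmf (labeled_examples m n X r) A) v =
   measure_pmf.expectation (replicate_pmf m (replicate_pmf n X)) (\<lambda>rs. pmf (A (map (\<lambda>x. (x, r x)) rs)) v)"
  unfolding labeled_examples_def rep_map pmf_bind by simp

lemma card_Y_bound:
  fixes p q :: "real list \<Rightarrow> real"
  assumes fin: "finite (set_pmf X)"
    and Lab: "Lab = p ` set_pmf (replicate_pmf k X) \<union> q ` set_pmf (replicate_pmf k X)"
    and Y: "Y = {y. set y \<subseteq> Lab \<and> length y = m}"
  shows "card Y \<le> (2 * card (set_pmf X) ^ k) ^ m"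
proof -
  let ?S = "set_pmf (replicate_pmf k X)"
  have S: "?S = {xs. set xs \<subseteq> set_pmf X \<and> length xs = k}" by (auto simp: set_replicate_pmf)
  have cS: "card ?S = card (set_pmf X) ^ k" unfolding S by (rule card_lists_length_eq[OF fin])
  have finS: "finite ?S" using fin_rep[OF fin] .
  have finLab: "finite Lab" unfolding Lab using finS by simp
  have "card Lab \<le> card (p ` ?S) + card (q ` ?S)" unfolding Lab by (rule card_Un_le)
  also have "\<dots> \<le> card ?S + card ?S" by (intro add_mono card_image_le finS)
  finally have cL: "card Lab \<le> 2 * card (set_pmf X) ^ k" using cS by simp
  have "card Y = card Lab ^ m" unfolding Y by (rule card_lists_length_eq[OF finLab])
  also have "\<dots> \<le> (2 * card (set_pmf X) ^ k) ^ m" by (intro power_mono cL) simp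
  finally show ?thesis .
qed

theorem theorem8p1:
  fixes k l :: nat and \<alpha> :: real
  shows "\<exists>c>0. \<exists>N::nat. \<forall>(X::real pmf) (p::real list \<Rightarrow> real) (q::real list \<Rightarrow> real) n m A.
           finite (set_pmf X) \<and> card (set_pmf X) = l \<and> \<alpha> = Min (pmf X ` set_pmf X) \<and>
           map_pmf p (replicate_pmf k X) = map_pmf q (replicate_pmf k X) \<and>
           n \<ge> N \<and> distinguishes m n k X p q A
           \<longrightarrow> c * ln (real n) \<le> real m"
proof -
  define B :: real where "B = 2 * real (max 1 l) ^ k"
  have B2: "B \<ge> 2" unfolding B_def by simp
  have lnB: "ln B > 0" using B2 by simp
  define c where "c = 1 / (4 * ln B)"
  have c: "c > 0" using lnB by (simp add: c_def)
  define N :: nat where "N = (20 * k)^2 + 1"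
  show ?thesis
  proof (intro exI[of _ c] conjI c exI[of _ N] allI impI)
    fix X :: "real pmf" and p q :: "real list \<Rightarrow> real" and n m and A :: "(real list \<times> real) list \<Rightarrow> bool pmf"
    assume H: "finite (set_pmf X) \<and> card (set_pmf X) = l \<and> \<alpha> = Min (pmf X ` set_pmf X) \<and>
           map_pmf p (replicate_pmf k X) = map_pmf q (replicate_pmf k X) \<and>
           n \<ge> N \<and> distinguishes m n k X p q A"
    then have fin: "finite (set_pmf X)" and cl: "card (set_pmf X) = l"
      and mu: "map_pmf p (replicate_pmf k X) = map_pmf q (replicate_pmf k X)"
      and nN: "n \<ge> N" and D: "distinguishes m n k X p q A" by auto
    show "c * ln (real n) \<le> real m"
    proof (rule ccontr)
      assume "\<not> c * ln (real n) \<le> real m"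
      then have mlt: "real m < c * ln (real n)" by simp
      show False
      proof (cases "k = 0")
        case True
        have "map_pmf p (return_pmf []) = map_pmf q (return_pmf [])" using mu True by simp
        then have pq: "p [] = q []" by simp
        have rp: "(\<lambda>x::real list. p []) \<in> junta_class n k p" unfolding junta_class_def using True by auto
        have rq: "(\<lambda>x::real list. p []) \<in> junta_class n k q" unfolding junta_class_def using True pq by auto
        let ?M = "bind_pmf (labeled_examples m n X (\<lambda>x. p [])) A"
        have "pmf ?M True \<ge> 2/3" "pmf ?M False \<ge> 2/3" using D rp rq unfolding distinguishes_def by auto
        then show False using pmf_True_False[of ?M] by simp
      next
        case False
        then have k1: "k \<ge> 1" by simp
        define t where "t = n div k"
        have tk: "t * k \<le> n" unfolding t_def by simp
        have nk: "n = t * k + n mod k" unfolding t_def by simp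
        have nmk: "n mod k < k" using k1 by simp
        have n_ge: "n \<ge> 400 * k^2 + 1" using nN by (simp add: N_def power2_eq_square)
        have t1: "t \<ge> 1"
        proof (rule ccontr)
          assume "\<not> 1 \<le> t" then have "t = 0" by simp
          then have "n < k" using nk nmk by simp
          moreover have "k \<le> 400 * k^2" using k1 by (simp add: power2_eq_square)
          ultimately show False using n_ge by simp
        qed
        define h where "h = (\<lambda>d. pmf (A d) True)"
        let ?R = "replicate_pmf m (replicate_pmf n X)"
        define Lab where "Lab = p ` set_pmf (replicate_pmf k X) \<union> q ` set_pmf (replicate_pmf k X)"
        define Y where "Y = {y. set y \<subseteq> Lab \<and> length y = m}"
        have bk: "b * k + k \<le> n" if "b < t" for b
        proof -
          have "(b + 1) * k \<le> t * k" using that by (intro mult_right_mono) auto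
          then show ?thesis using tk by simp
        qed
        have junta: "(\<lambda>x. F (sel k (b*k) x)) \<in> junta_class n k F" if "b < t" for b and F :: "real list \<Rightarrow> real"
          unfolding junta_class_def sel_def using bk[OF that]
          by (intro CollectI exI[of _ "[b*k..<b*k+k]"]) auto
        have trm: "measure_pmf.expectation ?R (\<lambda>rs. h (map (\<lambda>x. (x, p (sel k (b*k) x))) rs))
           - measure_pmf.expectation ?R (\<lambda>rs. h (map (\<lambda>x. (x, q (sel k (b*k) x))) rs)) \<ge> 1/3" if "b < t" for b
        proof -
          have a1: "pmf (bind_pmf (labeled_examples m n X (\<lambda>x. p (sel k (b*k) x))) A) True \<ge> 2/3"
            using D junta[OF that, of p] unfolding distinguishes_def by blast
          have a2: "pmf (bind_pmf (labeled_examples m n X (\<lambda>x. q (sel k (b*k) x))) A) False \<ge> 2/3"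
            using D junta[OF that, of q] unfolding distinguishes_def by blast
          have a3: "pmf (bind_pmf (labeled_examples m n X (\<lambda>x. q (sel k (b*k) x))) A) True \<le> 1/3"
            using a2 pmf_True_False[of "bind_pmf (labeled_examples m n X (\<lambda>x. q (sel k (b*k) x))) A"] by simp
          show ?thesis using a1 a3 unfolding accept h_def by simp
        qed
        have "real t / 3 = (\<Sum>b<t. 1/3)" by simp
        also have "\<dots> \<le> (\<Sum>b<t. measure_pmf.expectation ?R (\<lambda>rs. h (map (\<lambda>x. (x, p (sel k (b*k) x))) rs))
           - measure_pmf.expectation ?R (\<lambda>rs. h (map (\<lambda>x. (x, q (sel k (b*k) x))) rs)))"
          by (intro sum_mono trm) simp
        also have "\<dots> \<le> real (card Y) * sqrt (real t)"
          by (rule main_bound[OF fin mu tk t1 _ Lab_def Y_def]) (simp add: h_def pmf_le_1)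
        finally have A1: "real t / 3 \<le> real (card Y) * sqrt (real t)" .
        have cY: "real (card Y) \<le> B ^ m"
        proof -
          have "card Y \<le> (2 * card (set_pmf X) ^ k) ^ m" by (rule card_Y_bound[OF fin Lab_def Y_def])
          then have "real (card Y) \<le> real ((2 * l ^ k) ^ m)" using cl by (simp only: of_nat_le_iff)
          also have "\<dots> = (2 * real l ^ k) ^ m" by simp
          also have "\<dots> \<le> B ^ m" unfolding B_def by (intro power_mono mult_left_mono) auto
          finally show ?thesis .
        qed
        define s where "s = sqrt (real t)"
        have s0: "s > 0" "s * s = real t" using t1 by (auto simp: s_def)
        have "real (card Y) * s \<le> B ^ m * s" using s0 by (intro mult_right_mono[OF cY]) auto
        then have "s * s / 3 \<le> B ^ m * s" using A1 s0(2) unfolding s_def[symmetric] by linarith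
        then have "s * s \<le> s * (3 * B ^ m)" by (simp add: algebra_simps)
        then have "s \<le> 3 * B ^ m" using mult_le_cancel_left_pos[OF s0(1)] by blast
        then have "s * s \<le> (3 * B ^ m) * (3 * B ^ m)" using s0 by (intro mult_mono) auto
        then have tB: "real t \<le> 9 * B ^ (2*m)" using s0 by (simp add: power_mult power2_eq_square algebra_simps)
        have n1: "real n \<ge> 1" using n_ge by simp
        have "ln (B ^ (2*m)) = 2 * real m * ln B" using B2 by (simp add: ln_realpow)
        also have "\<dots> < 2 * (c * ln (real n)) * ln B" using mlt lnB by simp
        also have "\<dots> = ln (real n) / 2" using lnB by (simp add: c_def)
        also have "\<dots> = ln (sqrt (real n))" using n1 by (simp add: ln_sqrt)
        finally have "B ^ (2*m) < sqrt (real n)" using B2 n1 by (simp add: ln_less_cancel_iff)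
        then have tn: "real t < 9 * sqrt (real n)" using tB by simp
        define r where "r = sqrt (real n)"
        have r: "r * r = real n" "r \<ge> 0" using n1 by (auto simp: r_def)
        have "400 * k^2 \<le> n" using n_ge by simp
        then have "real (400 * k^2) \<le> real n" by (simp only: of_nat_le_iff)
        then have "sqrt (real (400 * k^2)) \<le> r" unfolding r_def by (rule real_sqrt_le_mono)
        moreover have "sqrt (real (400 * k^2)) = 20 * real k"
          by (simp add: real_sqrt_mult power2_eq_square)
        ultimately have r20: "r \<ge> 20 * real k" by simp
        have "real n = real t * real k + real (n mod k)" using nk by (metis of_nat_add of_nat_mult)
        then have "r * r < real t * real k + real k" using r nmk by simp
        also have "\<dots> \<le> 9 * r * real k + real k" using tn k1 unfolding r_def by (simp add: mult_right_mono)
        also have "\<dots> \<le> 10 * r * real k" using r20 k1 by (simp add: algebra_simps)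
        finally have "r * r < 10 * r * real k" .
        then have "r * r < r * (10 * real k)" by (simp add: algebra_simps)
        moreover have "r > 0" using r20 k1 by simp
        ultimately have "r < 10 * real k" using mult_less_cancel_left_pos by blast
        then show False using r20 k1 by simp
      qed
    qed
  qed
qed

end
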